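(* Let $R$ be a UFD with field of fractions $K$. Let $U \in R[X,Y]$ (polynomial ring in two variables) be such that $K[X,Y] = K[U]^{[1]}$. Then $K[U] \cap R[X,Y]$ is an inert subring of $R[X,Y]$, and $K[U] \cap R[X,Y] = R[W]$ for some element $W \in R[X,Y]$ which is transcendental over $R$ and satisfies $K[W] = K[U]$.
   Context: A subring $D$ of an integral domain $A$ is called inert if whenever $x, y \in A$ with $xy \in D \setminus \{0\}$, then $x, y \in D$. For a subring $C \subseteq D$, $D = C^{[1]}$ means $D = C[T]$ for some $T \in D$ transcendental over $C$. *)

theory Defs
  imports "HOL-Computational_Algebra.Polynomial_Factorial"
begin

text \<open>Bivariate polynomials R[X,Y] are modelled as the iterated polynomial ring
  ('a poly) poly.  Constants of R are embedded as [:[:c:]:].\<close>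

definition const2 :: "'a::zero \<Rightarrow> 'a poly poly" where
  "const2 c = [:[:c:]:]"

definition consts2 :: "'a::zero poly poly set" where
  "consts2 = range const2"

definition emb2 :: "'a::idom poly poly \<Rightarrow> 'a fract poly poly" where
  "emb2 f = map_poly (map_poly to_fract) f"

definition adjoin :: "'b::comm_ring_1 set \<Rightarrow> 'b \<Rightarrow> 'b set" where
  "adjoin C t = {poly p t | p. \<forall>i. coeff p i \<in> C}"

definition transc :: "'b::comm_ring_1 set \<Rightarrow> 'b \<Rightarrow> bool" where
  "transc C t \<longleftrightarrow> (\<forall>p. (\<forall>i. coeff p i \<in> C) \<and> poly p t = 0 \<longrightarrow> p = 0)"

definition poly_ring_1 :: "'b::comm_ring_1 set \<Rightarrow> 'b set \<Rightarrow> bool" where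
  "poly_ring_1 C D \<longleftrightarrow> (\<exists>T\<in>D. D = adjoin C T \<and> transc C T)"

definition is_subring :: "'b::comm_ring_1 set \<Rightarrow> bool" where
  "is_subring D \<longleftrightarrow> 0 \<in> D \<and> 1 \<in> D \<and> (\<forall>x\<in>D. \<forall>y\<in>D. x + y \<in> D \<and> x - y \<in> D \<and> x * y \<in> D)"

definition inert_subring :: "'b::idom set \<Rightarrow> bool" where
  "inert_subring D \<longleftrightarrow> is_subring D \<and>
     (\<forall>x y. x * y \<in> D - {0} \<longrightarrow> x \<in> D \<and> y \<in> D)"

end

theory Submission
  imports Defs
begin


lemma emb2_coeff: "coeff (coeff (emb2 f) i) j = to_fract (coeff (coeff f i) j)"
  by (simp add: emb2_def coeff_map_poly)

lemma emb2_0[simp]: "emb2 0 = 0" by (simp add: emb2_def)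
lemma emb2_1[simp]: "emb2 1 = 1" by (simp add: emb2_def)
lemma emb2_add[simp]: "emb2 (f + g) = emb2 f + emb2 g"
  by (intro poly_eqI) (simp add: emb2_def coeff_map_poly)
lemma emb2_diff[simp]: "emb2 (f - g) = emb2 f - emb2 g"
  by (intro poly_eqI) (simp add: emb2_def coeff_map_poly)
lemma fract_poly_sum: "map_poly to_fract (sum f A) = (\<Sum>x\<in>A. map_poly to_fract (f x))"
  by (cases "finite A", induction A rule: finite_induct) simp_all
lemma emb2_mult[simp]: "emb2 (f * g) = emb2 f * emb2 g"
  by (intro poly_eqI) (simp add: emb2_def coeff_map_poly coeff_mult fract_poly_sum)
lemma emb2_eq_iff[simp]: "emb2 f = emb2 g \<longleftrightarrow> f = g"
  by (auto simp: emb2_def poly_eq_iff coeff_map_poly)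
lemma emb2_const2[simp]: "emb2 (const2 c) = const2 (to_fract c)"
proof (intro poly_eqI)
  fix n m show "coeff (coeff (emb2 (const2 c)) n) m = coeff (coeff (const2 (to_fract c)) n) m"
    unfolding emb2_coeff by (simp add: const2_def coeff_pCons split: nat.split)
qed
lemma emb2_pCons: "emb2 (pCons a f) = pCons (map_poly to_fract a) (emb2 f)"
  by (simp add: emb2_def map_poly_pCons)
lemma emb2_poly: "emb2 (poly p t) = poly (map_poly emb2 p) (emb2 t)"
  by (induction p) (simp_all add: map_poly_pCons)

lemma const2_mult: "const2 (a*b) = const2 a * const2 b" by (simp add: const2_def)
lemma const2_add: "const2 (a+b) = const2 a + const2 b" by (simp add: const2_def)
lemma const2_diff: "const2 (a-b) = const2 a - const2 (b::'b::comm_ring_1)" by (simp add: const2_def)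
lemma const2_0[simp]: "const2 0 = 0" by (simp add: const2_def)
lemma const2_1[simp]: "const2 1 = 1" by (simp add: const2_def one_pCons)
lemma const2_eq_iff[simp]: "const2 a = const2 b \<longleftrightarrow> a = b" by (simp add: const2_def)

lemma coeff_const2_mult: "coeff (coeff (const2 d * g) i) j = d * coeff (coeff g i) j"
  by (simp add: const2_def)

lemma subring_sum: "is_subring D \<Longrightarrow> (\<And>i. i \<in> A \<Longrightarrow> f i \<in> D) \<Longrightarrow> sum f A \<in> D"
  unfolding is_subring_def
  by (induction A rule: infinite_finite_induct) auto

lemma coeffs_mult: "is_subring D \<Longrightarrow> \<forall>i. coeff p i \<in> D \<Longrightarrow> \<forall>i. coeff q i \<in> D \<Longrightarrow> \<forall>i. coeff (p*q) i \<in> D"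
  unfolding coeff_mult by (intro allI subring_sum) (auto simp: is_subring_def)

lemma coeffs_add: "is_subring D \<Longrightarrow> \<forall>i. coeff p i \<in> D \<Longrightarrow> \<forall>i. coeff q i \<in> D \<Longrightarrow> \<forall>i. coeff (p+q) i \<in> D"
  by (auto simp: is_subring_def)
lemma coeffs_diff: "is_subring D \<Longrightarrow> \<forall>i. coeff p i \<in> D \<Longrightarrow> \<forall>i. coeff q i \<in> D \<Longrightarrow> \<forall>i. coeff (p-q) i \<in> D"
  by (auto simp: is_subring_def)
lemma coeffs_const: "is_subring D \<Longrightarrow> c \<in> D \<Longrightarrow> \<forall>i. coeff [:c:] i \<in> D"
  by (auto simp: is_subring_def coeff_pCons split: nat.splits)

lemma poly_in: "is_subring D \<Longrightarrow> \<forall>i. coeff p i \<in> D \<Longrightarrow> t \<in> D \<Longrightarrow> poly p t \<in> D"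
proof (induction p)
  case 0 then show ?case by (simp add: is_subring_def)
next
  case (pCons a p)
  have "a \<in> D" using pCons.prems(2)[rule_format, of 0] by simp
  moreover have "\<forall>i. coeff p i \<in> D" using pCons.prems(2) by (metis coeff_pCons_Suc)
  ultimately show ?case using pCons by (simp add: is_subring_def)
qed

lemma adjoin_subring: assumes "is_subring C" shows "is_subring (adjoin C t)"
proof -
  have z: "0 \<in> C" and o: "1 \<in> C" using assms by (auto simp: is_subring_def)
  have "0 \<in> adjoin C t" unfolding adjoin_def using z by (intro CollectI exI[of _ 0]) auto
  moreover have "1 \<in> adjoin C t" unfolding adjoin_def using coeffs_const[OF assms o]
    by (intro CollectI exI[of _ 1]) (auto simp: one_pCons)
  moreover have "x + y \<in> adjoin C t \<and> x - y \<in> adjoin C t \<and> x * y \<in> adjoin C t"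
    if xy: "x \<in> adjoin C t" "y \<in> adjoin C t" for x y
  proof -
    obtain p q where p: "x = poly p t" "\<forall>i. coeff p i \<in> C" and q: "y = poly q t" "\<forall>i. coeff q i \<in> C"
      using xy unfolding adjoin_def by blast
    show ?thesis unfolding adjoin_def
      using p q coeffs_add[OF assms p(2) q(2)] coeffs_diff[OF assms p(2) q(2)] coeffs_mult[OF assms p(2) q(2)]
      by (intro conjI CollectI exI[of _ "p+q"] exI[of _ "p-q"] exI[of _ "p*q"]) auto
  qed
  ultimately show ?thesis unfolding is_subring_def by blast
qed

lemma adjoin_base: "is_subring C \<Longrightarrow> c \<in> C \<Longrightarrow> c \<in> adjoin C t"
  unfolding adjoin_def by (intro CollectI exI[of _ "[:c:]"]) (auto dest: coeffs_const)

lemma adjoin_gen: "is_subring C \<Longrightarrow> t \<in> adjoin C t"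
  unfolding adjoin_def
  by (intro CollectI exI[of _ "[:0,1:]"]) (auto simp: is_subring_def coeff_pCons split: nat.splits)

lemma adjoin_minimal: "is_subring D \<Longrightarrow> C \<subseteq> D \<Longrightarrow> t \<in> D \<Longrightarrow> adjoin C t \<subseteq> D"
  unfolding adjoin_def using poly_in by blast

lemma adjoin_mono: "C \<subseteq> C' \<Longrightarrow> adjoin C t \<subseteq> adjoin C' t"
  unfolding adjoin_def by blast

lemma consts2_subring: "is_subring (consts2 :: 'b::comm_ring_1 poly poly set)"
  unfolding is_subring_def consts2_def
  by (auto simp: image_iff const2_add[symmetric] const2_diff[symmetric] const2_mult[symmetric]
      intro: exI[of _ 0] exI[of _ 1])


lemma pcompose_eq0: fixes r s :: "'c::idom poly"
  assumes "degree s > 0" "pcompose r s = 0" shows "r = 0"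
proof -
  have "degree r * degree s = 0" using assms(2) degree_pcompose[of r s] by simp
  hence "degree r = 0" using assms(1) by simp
  then obtain a where "r = [:a:]" by (meson degree_eq_zeroE)
  thus ?thesis using assms(2) by simp
qed

lemma consts2_poly_repr:
  assumes "\<forall>i. coeff p i \<in> (consts2 :: 'c::zero poly poly set)"
  shows "p = map_poly (\<lambda>c. [:c:]) (map_poly (\<lambda>c. [:c:]) (map_poly (\<lambda>c. coeff (coeff c 0) 0) p))"
proof -
  have "coeff p n = coeff (map_poly (\<lambda>c. [:c:]) (map_poly (\<lambda>c. [:c:]) (map_poly (\<lambda>c. coeff (coeff c 0) 0) p))) n" for n
  proof -
    from assms obtain c where c: "coeff p n = const2 c" unfolding consts2_def by blast
    show ?thesis by (simp add: coeff_map_poly c const2_def)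
  qed
  thus ?thesis by (simp add: poly_eq_iff)
qed

lemma nonconst_transc:
  fixes t :: "'c::idom poly poly"
  assumes "t \<notin> consts2" shows "transc consts2 t"
  unfolding transc_def
proof (intro allI impI, elim conjE)
  fix p assume cp: "\<forall>i. coeff p i \<in> consts2" and pt: "poly p t = 0"
  define p0 where "p0 = map_poly (\<lambda>c. coeff (coeff c 0) 0) p"
  have rep: "p = map_poly (\<lambda>c. [:c:]) (map_poly (\<lambda>c. [:c:]) p0)"
    using consts2_poly_repr[OF cp] unfolding p0_def .
  have pc: "poly p t = pcompose (map_poly (\<lambda>c. [:c:]) p0) t"
    by (subst rep) (simp add: pcompose_altdef)
  have "map_poly (\<lambda>c. [:c:]) p0 = 0"
  proof (cases "degree t > 0")
    case True then show ?thesis using pcompose_eq0 pt pc by metis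
  next
    case False
    then obtain t0 where t0: "t = [:t0:]" by (meson degree_eq_zeroE not_gr0)
    have "degree t0 > 0"
    proof (rule ccontr)
      assume "\<not> degree t0 > 0"
      then obtain a where "t0 = [:a:]" by (meson degree_eq_zeroE not_gr0)
      hence "t = const2 a" using t0 by (simp add: const2_def)
      thus False using assms by (simp add: consts2_def)
    qed
    have "pcompose (map_poly (\<lambda>c. [:c:]) p0) t = [:pcompose p0 t0:]"
      unfolding t0 pcompose_pCons_0 by (simp add: pcompose_altdef)
    hence "pcompose p0 t0 = 0" using pt pc by simp
    hence "p0 = 0" using pcompose_eq0 \<open>degree t0 > 0\<close> by metis
    thus ?thesis by simp
  qed
  thus "p = 0" using rep by simp
qed

lemma const2_dvd_iff: "const2 (d::'c::idom) dvd f \<longleftrightarrow> (\<forall>i j. d dvd coeff (coeff f i) j)"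
  unfolding const2_def const_poly_dvd_iff by simp

lemma prime_const2: "prime (p::'c::{factorial_semiring,idom}) \<Longrightarrow> prime_elem (const2 p)"
  unfolding const2_def by (simp add: prime_elem_const_poly_iff prime_imp_prime_elem)

definition prim2 :: "'c::factorial_semiring poly poly \<Rightarrow> bool" where
  "prim2 W \<longleftrightarrow> (\<forall>p. prime p \<longrightarrow> \<not> const2 p dvd W)"

lemma gauss2:
  fixes W h :: "'c::{factorial_semiring,idom} poly poly"
  assumes "prim2 W" shows "d \<noteq> 0 \<Longrightarrow> const2 d dvd W * h \<Longrightarrow> const2 d dvd h"
proof (induction d arbitrary: h rule: prime_divisors_induct)
  case zero then show ?case by simp
next
  case (unit x)
  have "const2 x dvd 1" using unit(1) unfolding const2_def by (simp add: is_unit_const_poly_iff)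
  then show ?case by (meson dvd_trans one_dvd)
next
  case (factor p x)
  have x0: "x \<noteq> 0" using factor.prems by auto
  have p0: "const2 p \<noteq> 0" using factor.hyps by (simp add: const2_def)
  have "const2 p dvd W * h" using factor.prems(2) unfolding const2_mult
    using dvd_mult_left by blast
  moreover have "\<not> const2 p dvd W" using assms factor.hyps unfolding prim2_def by blast
  ultimately have "const2 p dvd h" using prime_const2[OF factor.hyps] prime_elem_dvd_mult_iff by blast
  then obtain h1 where h1: "h = const2 p * h1" by blast
  have "const2 p * const2 x dvd const2 p * (W * h1)" using factor.prems(2) unfolding const2_mult h1
    by (simp add: ac_simps)
  hence "const2 x dvd W * h1" using p0 by simp
  hence "const2 x dvd h1" using factor.IH x0 by blast
  thus ?case unfolding h1 const2_mult by simp
qed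

lemma clear1: "\<exists>d h. d \<noteq> 0 \<and> smult (to_fract d) (p :: 'c::idom fract poly) = map_poly to_fract h"
proof (induction p)
  case 0 then show ?case by (intro exI[of _ 1] exI[of _ 0]) simp
next
  case (pCons a p)
  then obtain d h where dh: "d \<noteq> 0" "smult (to_fract d) p = map_poly to_fract h" by blast
  obtain n m where a: "a = Fract n m" "m \<noteq> 0" by (cases a) auto
  have e: "smult (to_fract (d*m)) p = smult (to_fract m) (smult (to_fract d) p)" by (simp add: mult.commute)
  have "smult (to_fract (d*m)) (pCons a p) = map_poly to_fract (pCons (n*d) (smult m h))"
    using dh a unfolding smult_pCons e by (simp add: map_poly_pCons Fract_conv_to_fract smult_conv_map_poly[symmetric] mult_ac)
  thus ?case using dh a by (intro exI[of _ "d*m"] exI) auto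
qed

lemma emb2_smult: "emb2 (smult [:c:] h) = smult [:to_fract c:] (emb2 h)"
proof -
  have "smult [:c:] h = const2 c * h" by (simp add: const2_def)
  hence "emb2 (smult [:c:] h) = const2 (to_fract c) * emb2 h" by simp
  thus ?thesis by (simp add: const2_def)
qed

lemma clear2: "\<exists>d h. d \<noteq> 0 \<and> smult [:to_fract d:] (g :: 'c::idom fract poly poly) = emb2 h"
proof (induction g)
  case 0 then show ?case by (intro exI[of _ 1] exI[of _ 0]) simp
next
  case (pCons a g)
  then obtain d h where dh: "d \<noteq> 0" "smult [:to_fract d:] g = emb2 h" by blast
  obtain m ha where m: "m \<noteq> 0" "smult (to_fract m) a = map_poly to_fract ha" using clear1 by blast
  have "smult [:to_fract (d*m):] (pCons a g) = emb2 (pCons (smult d ha) (smult [:m:] h))"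
    unfolding emb2_pCons emb2_smult using dh m
    by (simp add: mult_ac flip: dh(2) m(2))
  thus ?case using dh m by (intro exI[of _ "d*m"] exI) auto
qed


lemma coeff00_mult: "coeff (coeff (x*y) 0) 0 = coeff (coeff x 0) 0 * coeff (coeff (y::'c::comm_semiring_1 poly poly) 0) 0"
  by (simp add: coeff_mult_0)

lemma coeff00_const2[simp]: "coeff (coeff (const2 a) 0) 0 = a"
  by (simp add: const2_def)

lemma smult_const2: "smult [:c:] g = const2 c * g" by (simp add: const2_def)

lemma descend:
  fixes W :: "'a::{factorial_semiring,idom} poly poly"
  assumes prim: "prim2 W" and W00: "coeff (coeff W 0) 0 = 0"
  shows "\<forall>i. coeff q i \<in> consts2 \<Longrightarrow> emb2 f = poly q (emb2 W) \<Longrightarrow>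
         \<exists>p. (\<forall>i. coeff p i \<in> consts2) \<and> f = poly p W"
proof (induction q arbitrary: f)
  case 0
  then have "f = 0" using emb2_eq_iff[of f 0] by simp
  then show ?case by (intro exI[of _ 0]) (simp add: consts2_def image_iff exI[of _ 0])
next
  case (pCons a q)
  from pCons.prems(1)[rule_format, of 0] obtain a' where a': "a = const2 a'"
    by (auto simp: consts2_def)
  have cq: "\<forall>i. coeff q i \<in> consts2" using pCons.prems(1) by (metis coeff_pCons_Suc)
  define g' where "g' = poly q (emb2 W)"
  define r where "r = coeff (coeff f 0) 0"
  have ef: "emb2 f = const2 a' + emb2 W * g'" using pCons.prems(2) a' g'_def by simp
  have "coeff (coeff (emb2 f) 0) 0 = a'"
    unfolding ef by (simp add: coeff_mult_0 emb2_coeff W00)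
  hence ar: "a' = to_fract r" unfolding r_def emb2_coeff by simp
  obtain d h where dh: "d \<noteq> 0" "const2 (to_fract d) * g' = emb2 h"
    using clear2[of g'] unfolding smult_const2 by blast
  have "emb2 (W * h) = const2 (to_fract d) * (emb2 f - const2 (to_fract r))"
    unfolding emb2_mult dh(2)[symmetric] ef ar by (simp add: algebra_simps)
  also have "\<dots> = emb2 (const2 d * (f - const2 r))" by simp
  finally have Wh: "W * h = const2 d * (f - const2 r)" by (simp only: emb2_eq_iff)
  hence "const2 d dvd W * h" by simp
  hence "const2 d dvd h" using gauss2[OF prim dh(1)] by blast
  then obtain g where g: "h = const2 d * g" by blast
  have d0: "const2 (to_fract d) \<noteq> (0 :: 'a fract poly poly)" using dh(1) by (simp add: const2_def)
  have "const2 (to_fract d) * g' = const2 (to_fract d) * emb2 g" using dh(2) g by simp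
  hence "g' = emb2 g" using d0 by simp
  then obtain p where p: "\<forall>i. coeff p i \<in> consts2" "g = poly p W"
    using pCons.IH[OF cq] g'_def by metis
  have d0': "const2 d \<noteq> 0" using dh(1) by (simp add: const2_def)
  have "const2 d * (W * g) = const2 d * (f - const2 r)" using Wh g by (simp add: ac_simps)
  hence "W * g = f - const2 r" using d0' by simp
  hence "f = poly (pCons (const2 r) p) W" using p by (simp add: algebra_simps)
  moreover have "\<forall>i. coeff (pCons (const2 r) p) i \<in> consts2"
    using p(1) by (auto simp: coeff_pCons consts2_def split: nat.split)
  ultimately show ?case by blast
qed


lemma poly_consts2_pcompose:
  assumes "\<forall>i. coeff p i \<in> (consts2 :: 'c::idom poly poly set)"
  shows "\<exists>p0. poly p t = pcompose (map_poly (\<lambda>c. [:c:]) p0) t"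
proof -
  have "p = map_poly (\<lambda>c. [:c:]) (map_poly (\<lambda>c. [:c:]) (map_poly (\<lambda>c. coeff (coeff c 0) 0) p))"
    using consts2_poly_repr[OF assms] .
  hence "poly p t = pcompose (map_poly (\<lambda>c. [:c:]) (map_poly (\<lambda>c. coeff (coeff c 0) 0) p)) t"
    by (metis pcompose_altdef)
  thus ?thesis by blast
qed

lemma not_univariate:
  fixes T :: "'c::field poly poly"
  assumes "UNIV \<subseteq> adjoin consts2 T" shows False
proof -
  have "[:0,1:] \<in> adjoin consts2 T" using assms by blast
  then obtain p where p: "\<forall>i. coeff p i \<in> consts2" "[:0,1:] = poly p T" unfolding adjoin_def by blast
  then obtain p0 where p0: "[:0,1:] = pcompose (map_poly (\<lambda>c. [:c:]) p0) T"
    using poly_consts2_pcompose by metis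
  have "1 = degree (map_poly (\<lambda>c. [:c:]) p0) * degree T"
    using degree_pcompose arg_cong[OF p0, of degree] by simp
  hence dT: "degree T \<noteq> 0" by auto
  have "[:[:0,1:]:] \<in> adjoin consts2 T" using assms by blast
  then obtain q where q: "\<forall>i. coeff q i \<in> consts2" "[:[:0,1:]:] = poly q T" unfolding adjoin_def by blast
  then obtain q0 where q0: "[:[:0,1:]:] = pcompose (map_poly (\<lambda>c. [:c:]) q0) T"
    using poly_consts2_pcompose by metis
  have "degree (map_poly (\<lambda>c. [:c:]) q0) * degree T = 0"
    by (metis q0 degree_pcompose degree_pCons_0)
  hence "degree (map_poly (\<lambda>c. [:c:]) q0) = 0" using dT by simp
  hence "degree q0 = 0" by (simp add: degree_map_poly)
  then obtain c where "q0 = [:c:]" by (meson degree_eq_zeroE)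
  hence "[:[:0,1:]:] = [:[:c:]:]" using q0 by (simp add: map_poly_pCons)
  thus False by simp
qed


lemma emb2_eq_0_iff[simp]: "emb2 f = 0 \<longleftrightarrow> f = 0"
  using emb2_eq_iff[of f 0] by simp

theorem lemma5p1:
  fixes U :: "'a::{factorial_semiring, idom} poly poly"
  assumes "poly_ring_1 (adjoin consts2 (emb2 U)) (UNIV :: 'a fract poly poly set)"
  shows "inert_subring {f :: 'a poly poly. emb2 f \<in> adjoin consts2 (emb2 U)}
     \<and> (\<exists>W :: 'a poly poly.
          {f. emb2 f \<in> adjoin consts2 (emb2 U)} = adjoin consts2 W
          \<and> transc consts2 W
          \<and> adjoin consts2 (emb2 W) = adjoin consts2 (emb2 U))"
proof -
  define KU where "KU = adjoin consts2 (emb2 U)"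
  have KUs: "is_subring KU" unfolding KU_def by (rule adjoin_subring[OF consts2_subring])
  have cKU: "consts2 \<subseteq> KU" unfolding KU_def using adjoin_base[OF consts2_subring] by blast
  obtain T where T: "UNIV = adjoin KU T" "transc KU T"
    using assms unfolding poly_ring_1_def KU_def by blast
  have nc: "emb2 U \<notin> consts2"
  proof
    assume "emb2 U \<in> consts2"
    hence "KU \<subseteq> consts2" unfolding KU_def using adjoin_minimal[OF consts2_subring] by blast
    hence "UNIV \<subseteq> adjoin consts2 T" using T(1) adjoin_mono by metis
    thus False by (rule not_univariate)
  qed
  define A where "A = {f :: 'a poly poly. emb2 f \<in> KU}"
  have inert: "inert_subring A"
  proof -
    have sub: "is_subring A" using KUs unfolding A_def is_subring_def by auto
    have "x \<in> A \<and> y \<in> A" if xy: "x * y \<in> A - {0}" for x y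
    proof -
      define c where "c = emb2 (x * y)"
      have c: "c \<in> KU" "c \<noteq> 0" using xy unfolding c_def A_def by auto
      obtain P where P: "\<forall>i. coeff P i \<in> KU" "emb2 x = poly P T"
        using T(1) unfolding adjoin_def by blast
      obtain Q where Q: "\<forall>i. coeff Q i \<in> KU" "emb2 y = poly Q T"
        using T(1) unfolding adjoin_def by blast
      have "\<forall>i. coeff (P * Q - [:c:]) i \<in> KU"
        by (rule coeffs_diff[OF KUs coeffs_mult[OF KUs P(1) Q(1)] coeffs_const[OF KUs c(1)]])
      moreover have "poly (P * Q - [:c:]) T = 0" using P Q unfolding c_def by simp
      ultimately have "P * Q - [:c:] = 0" using T(2) unfolding transc_def by blast
      hence PQ: "P * Q = [:c:]" by simp
      hence "P \<noteq> 0" "Q \<noteq> 0" using c(2) by auto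
      hence "degree P + degree Q = 0" using degree_mult_eq[of P Q] PQ by simp
      hence "degree P = 0" "degree Q = 0" by auto
      then obtain p q where "P = [:p:]" "Q = [:q:]" by (meson degree_eq_zeroE)
      hence "emb2 x = coeff P 0" "emb2 y = coeff Q 0" using P Q by auto
      thus ?thesis using P(1) Q(1) unfolding A_def by auto
    qed
    thus ?thesis using sub unfolding inert_subring_def by blast
  qed
  define u00 where "u00 = coeff (coeff U 0) 0"
  define U0 where "U0 = U - const2 u00"
  have U0nz: "U0 \<noteq> 0"
  proof
    assume "U0 = 0"
    hence "U = const2 u00" unfolding U0_def by simp
    thus False using nc by (simp add: consts2_def)
  qed
  then obtain i0 where "coeff U0 i0 \<noteq> 0" by (meson leading_coeff_0_iff)
  then obtain j0 where c0: "coeff (coeff U0 i0) j0 \<noteq> 0" by (meson leading_coeff_0_iff)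
  define c0 where "c0 = coeff (coeff U0 i0) j0"
  define P where "P = (\<lambda>k. \<exists>d. d \<noteq> 0 \<and> const2 d dvd U0 \<and> size (prime_factorization d) = k)"
  have P0: "P 0" unfolding P_def by (intro exI[of _ 1]) simp
  have Pb: "\<forall>k. P k \<longrightarrow> k \<le> size (prime_factorization c0)"
  proof (intro allI impI)
    fix k assume "P k"
    then obtain d where d: "d \<noteq> 0" "const2 d dvd U0" "size (prime_factorization d) = k"
      unfolding P_def by blast
    have "d dvd c0" using d(2) unfolding const2_dvd_iff c0_def by blast
    hence "prime_factorization d \<subseteq># prime_factorization c0"
      using prime_factorization_subset_iff_dvd d(1) c0 c0_def by blast
    thus "k \<le> size (prime_factorization c0)" using d(3) size_mset_mono by blast
  qed
  obtain k where k: "P k" "\<forall>y. P y \<longrightarrow> y \<le> k" using Nat.ex_has_greatest_nat[OF P0 Pb] by blast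
  then obtain d where d: "d \<noteq> 0" "const2 d dvd U0" "size (prime_factorization d) = k"
    unfolding P_def by blast
  then obtain W where W: "U0 = const2 d * W" by blast
  have prim: "prim2 W" unfolding prim2_def
  proof (intro allI impI notI)
    fix p :: 'a assume p: "prime p" "const2 p dvd W"
    have "const2 (d * p) dvd U0" using p(2) unfolding W const2_mult by simp
    moreover have "d * p \<noteq> 0" using d(1) p(1) by simp
    moreover have "size (prime_factorization (d * p)) = k + 1"
      using d p(1) by (simp add: prime_factorization_mult prime_factorization_prime)
    ultimately have "P (k+1)" unfolding P_def by blast
    thus False using k(2) by fastforce
  qed
  have W00: "coeff (coeff W 0) 0 = 0"
  proof -
    have "coeff (coeff U0 0) 0 = 0" unfolding U0_def u00_def by simp
    hence "d * coeff (coeff W 0) 0 = 0" unfolding W coeff_const2_mult .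
    thus ?thesis using d(1) by simp
  qed
  have Ueq: "emb2 U = const2 (to_fract d) * emb2 W + const2 (to_fract u00)"
  proof -
    have "U = const2 d * W + const2 u00" using W unfolding U0_def by (simp add: algebra_simps)
    thus ?thesis by simp
  qed
  have Wnc: "W \<notin> consts2"
  proof
    assume "W \<in> consts2"
    then obtain w where "W = const2 w" unfolding consts2_def by blast
    hence "emb2 U = const2 (to_fract d * to_fract w + to_fract u00)"
      using Ueq by (simp add: const2_add const2_mult)
    thus False using nc unfolding consts2_def by blast
  qed
  define KW where "KW = adjoin consts2 (emb2 W)"
  have KWs: "is_subring KW" unfolding KW_def by (rule adjoin_subring[OF consts2_subring])
  have cKW: "consts2 \<subseteq> KW" unfolding KW_def using adjoin_base[OF consts2_subring] by blast
  have KWU: "KW = KU"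
  proof
    have "emb2 W \<in> KW" unfolding KW_def by (rule adjoin_gen[OF consts2_subring])
    moreover have a: "const2 (to_fract d) \<in> KW" "const2 (to_fract u00) \<in> KW"
      using cKW by (auto simp: consts2_def)
    ultimately have "const2 (to_fract d) * emb2 W \<in> KW" using KWs unfolding is_subring_def by blast
    hence "emb2 U \<in> KW" unfolding Ueq using KWs a unfolding is_subring_def by blast
    thus "KU \<subseteq> KW" unfolding KU_def using adjoin_minimal[OF KWs cKW] by blast
  next
    have "emb2 W = const2 (inverse (to_fract d)) * (emb2 U - const2 (to_fract u00))"
      unfolding Ueq using d(1) by (simp add: const2_mult[symmetric] mult.assoc[symmetric])
    moreover have "emb2 U \<in> KU" unfolding KU_def by (rule adjoin_gen[OF consts2_subring])
    moreover have a: "const2 (inverse (to_fract d)) \<in> KU" "const2 (to_fract u00) \<in> KU"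
      using cKU by (auto simp: consts2_def)
    ultimately have "emb2 W \<in> KU" using KUs unfolding is_subring_def by metis
    thus "KW \<subseteq> KU" unfolding KW_def using adjoin_minimal[OF KUs cKU] by blast
  qed
  have AW: "A = adjoin consts2 W"
  proof
    show "A \<subseteq> adjoin consts2 W"
    proof
      fix f assume "f \<in> A"
      hence "emb2 f \<in> KW" unfolding A_def KWU by simp
      then obtain q where q: "\<forall>i. coeff q i \<in> consts2" "emb2 f = poly q (emb2 W)"
        unfolding KW_def adjoin_def by blast
      from descend[OF prim W00 q] show "f \<in> adjoin consts2 W" unfolding adjoin_def by blast
    qed
  next
    show "adjoin consts2 W \<subseteq> A"
    proof
      fix f assume "f \<in> adjoin consts2 W"
      then obtain p where p: "\<forall>i. coeff p i \<in> consts2" "f = poly p W" unfolding adjoin_def by blast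
      have "emb2 f = poly (map_poly emb2 p) (emb2 W)" unfolding p(2) emb2_poly ..
      moreover have "\<forall>i. coeff (map_poly emb2 p) i \<in> consts2"
      proof
        fix i
        obtain c where "coeff p i = const2 c" using p(1) unfolding consts2_def by blast
        thus "coeff (map_poly emb2 p) i \<in> consts2" by (simp add: coeff_map_poly consts2_def)
      qed
      ultimately have "emb2 f \<in> KW" unfolding KW_def adjoin_def by blast
      thus "f \<in> A" unfolding A_def KWU by simp
    qed
  qed
  show ?thesis
    using inert AW nonconst_transc[OF Wnc] KWU unfolding A_def KW_def KU_def by blast
qed

end
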